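(* Let $\tau$ be a strongly $(n,p;a,c)$ regular graph with $0<c<p<n-1$, whose adjacency matrix has eigenvalues $p$, $r$ and $s$, where $r=\frac{a-c+\sqrt{(a-c)^2+4(p-c)}}{2}$ and $s=\frac{a-c-\sqrt{(a-c)^2+4(p-c)}}{2}$. Then: (1) for every odd positive integer $k$: $(rn+p-r)^k+(-n+p-r)^k p+(p-r)^k(n-p-1)\ge 0$; (2) for every odd positive integer $k$: $(rn+p-s)^k+(-n+p-s)^k p+(p-s)^k(n-p-1)\ge 0$; (3) for all positive integers $k,l$ with $k+l$ odd: $(rn+p-r)^k(rn+p-s)^l+(-n+p-r)^k(-n+p-s)^l p+(p-r)^k(p-s)^l(n-p-1)\ge 0$; (4) for every positive integer $k$ and every odd positive integer $l$: $(|s|n+s-p)^k(rn+p-s)^l+(n+s-p)^k(-n+p-s)^l p+(s-p)^k(p-s)^l(n-p-1)\ge 0$.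
   Context: A graph is strongly $(n,p;a,c)$ regular if it is a simple graph on $n$ vertices, not complete and not null, every vertex has exactly $p$ neighbours, every pair of adjacent vertices has exactly $a$ common neighbours, and every pair of distinct non-adjacent vertices has exactly $c$ common neighbours. *)

theory Defs
  imports Complex_Main
begin

definition strongly_regular ::
  "'a set \<Rightarrow> ('a \<Rightarrow> 'a \<Rightarrow> bool) \<Rightarrow> nat \<Rightarrow> nat \<Rightarrow> nat \<Rightarrow> nat \<Rightarrow> bool" where
  "strongly_regular V E n p a c \<longleftrightarrow>
     finite V \<and> card V = n \<and>
     (\<forall>x y. E x y \<longrightarrow> x \<in> V \<and> y \<in> V) \<and>
     (\<forall>x. \<not> E x x) \<and>
     (\<forall>x y. E x y \<longrightarrow> E y x) \<and>
     (\<exists>x\<in>V. \<exists>y\<in>V. x \<noteq> y \<and> \<not> E x y) \<and>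
     (\<exists>x y. E x y) \<and>
     (\<forall>x\<in>V. card {y \<in> V. E x y} = p) \<and>
     (\<forall>x\<in>V. \<forall>y\<in>V. E x y \<longrightarrow> card {z \<in> V. E x z \<and> E y z} = a) \<and>
     (\<forall>x\<in>V. \<forall>y\<in>V. x \<noteq> y \<and> \<not> E x y \<longrightarrow> card {z \<in> V. E x z \<and> E y z} = c)"

end

theory Submission
  imports Defs "HOL-Library.Nat_Bijection"
begin

definition ind :: "bool \<Rightarrow> real" where "ind b = (if b then 1 else 0)"

definition gramV :: "'a set \<Rightarrow> ('a \<Rightarrow> 'a \<Rightarrow> real) \<Rightarrow> bool" where
 "gramV V K \<longleftrightarrow> (\<exists>I::nat set. \<exists>g. finite I \<and> (\<forall>x\<in>V. \<forall>y\<in>V. K x y = (\<Sum>i\<in>I. g i x * g i y)))"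

lemma gram_mult:
  assumes "gramV V K1" "gramV V K2"
  shows "gramV V (\<lambda>x y. K1 x y * K2 x y)"
proof -
  obtain I1 :: "nat set" and g1 where I1: "finite I1" "\<forall>x\<in>V. \<forall>y\<in>V. K1 x y = (\<Sum>i\<in>I1. g1 i x * g1 i y)"
    using assms(1) unfolding gramV_def by blast
  obtain I2 :: "nat set" and g2 where I2: "finite I2" "\<forall>x\<in>V. \<forall>y\<in>V. K2 x y = (\<Sum>i\<in>I2. g2 i x * g2 i y)"
    using assms(2) unfolding gramV_def by blast
  define g where "g = (\<lambda>t x. g1 (fst (prod_decode t)) x * g2 (snd (prod_decode t)) x)"
  have "\<forall>x\<in>V. \<forall>y\<in>V. K1 x y * K2 x y = (\<Sum>t\<in>prod_encode ` (I1 \<times> I2). g t x * g t y)"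
  proof (intro ballI)
    fix x y assume "x \<in> V" "y \<in> V"
    then have "K1 x y * K2 x y = (\<Sum>i\<in>I1. \<Sum>j\<in>I2. (g1 i x * g1 i y) * (g2 j x * g2 j y))"
      using I1 I2 by (simp add: sum_product)
    also have "\<dots> = (\<Sum>q\<in>I1 \<times> I2. (g1 (fst q) x * g1 (fst q) y) * (g2 (snd q) x * g2 (snd q) y))"
      by (simp only: sum.cartesian_product') simp
    also have "\<dots> = (\<Sum>q\<in>I1 \<times> I2. g (prod_encode q) x * g (prod_encode q) y)"
      by (rule sum.cong[OF refl]) (simp add: g_def mult_ac)
    also have "\<dots> = (\<Sum>t\<in>prod_encode ` (I1 \<times> I2). g t x * g t y)"
      by (simp add: sum.reindex[OF inj_prod_encode] comp_def)
    finally show "K1 x y * K2 x y = (\<Sum>t\<in>prod_encode ` (I1 \<times> I2). g t x * g t y)" .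
  qed
  moreover have "finite (prod_encode ` (I1 \<times> I2))" using I1 I2 by simp
  ultimately show ?thesis unfolding gramV_def by blast
qed

lemma gram_one: "gramV V (\<lambda>x y. 1)"
  unfolding gramV_def by (rule exI[of _ "{0}"], rule exI[of _ "\<lambda>i x. 1"]) simp

lemma gram_pow: "gramV V K \<Longrightarrow> gramV V (\<lambda>x y. K x y ^ k)"
proof (induction k)
  case 0 then show ?case using gram_one by simp
next
  case (Suc k)
  then show ?case using gram_mult[OF Suc.prems Suc.IH] by (simp only: power_Suc)
qed

lemma gram_sum:
  assumes "finite V" "gramV V K"
  shows "0 \<le> (\<Sum>x\<in>V. \<Sum>y\<in>V. K x y)"
proof -
  obtain I :: "nat set" and g where I: "finite I" "\<forall>x\<in>V. \<forall>y\<in>V. K x y = (\<Sum>i\<in>I. g i x * g i y)"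
    using assms(2) unfolding gramV_def by blast
  have "(\<Sum>x\<in>V. \<Sum>y\<in>V. K x y) = (\<Sum>x\<in>V. \<Sum>y\<in>V. \<Sum>i\<in>I. g i x * g i y)"
    using I by simp
  also have "\<dots> = (\<Sum>i\<in>I. (\<Sum>x\<in>V. g i x) * (\<Sum>y\<in>V. g i y))"
  proof -
    have "(\<Sum>x\<in>V. \<Sum>y\<in>V. \<Sum>i\<in>I. g i x * g i y) = (\<Sum>x\<in>V. \<Sum>i\<in>I. \<Sum>y\<in>V. g i x * g i y)"
      by (rule sum.cong[OF refl], rule sum.swap)
    also have "\<dots> = (\<Sum>i\<in>I. \<Sum>x\<in>V. \<Sum>y\<in>V. g i x * g i y)"
      by (rule sum.swap)
    also have "\<dots> = (\<Sum>i\<in>I. (\<Sum>x\<in>V. g i x) * (\<Sum>y\<in>V. g i y))"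
      by (simp add: sum_product)
    finally show ?thesis .
  qed
  also have "\<dots> \<ge> 0" by (intro sum_nonneg) (simp)
  finally show ?thesis .
qed

lemma gram_sq:
  fixes K :: "'a \<Rightarrow> 'a \<Rightarrow> real"
  assumes "finite V" "0 < lam" "\<forall>x\<in>V. \<forall>y\<in>V. (\<Sum>z\<in>V. K z x * K z y) = lam * K x y"
  shows "gramV V K"
proof -
  obtain N f where Nf: "V = f ` {i. i < (N::nat)}" "inj_on f {i. i < N}"
    using finite_imp_nat_seg_image_inj_on[OF assms(1)] by blast
  define g where "g = (\<lambda>i x. K (f i) x / sqrt lam)"
  have "\<forall>x\<in>V. \<forall>y\<in>V. K x y = (\<Sum>i\<in>{i. i < N}. g i x * g i y)"
  proof (intro ballI)
    fix x y assume xy: "x \<in> V" "y \<in> V"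
    have "(\<Sum>i\<in>{i. i < N}. g i x * g i y) = (\<Sum>i\<in>{i. i < N}. K (f i) x * K (f i) y) / lam"
      using assms(2) by (simp add: g_def sum_divide_distrib)
    also have "\<dots> = (\<Sum>z\<in>V. K z x * K z y) / lam"
      using Nf by (simp add: sum.reindex)
    also have "\<dots> = K x y" using assms xy by simp
    finally show "K x y = (\<Sum>i\<in>{i. i < N}. g i x * g i y)" by simp
  qed
  then show ?thesis unfolding gramV_def by blast
qed


lemma sum_ind_card: "finite V \<Longrightarrow> (\<Sum>z\<in>V. ind (P z)) = real (card {z\<in>V. P z})"
  by (simp add: ind_def sum.inter_filter[symmetric])

lemma dsum: assumes "finite V" "w \<in> V" shows "(\<Sum>z\<in>V. ind (z = w) * h z) = h w"
proof -
  have "(\<Sum>z\<in>V. ind (z = w) * h z) = (\<Sum>z\<in>V. if z = w then h z else 0)"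
    by (rule sum.cong) (auto simp: ind_def)
  then show ?thesis using assms by simp
qed

lemma expand:
  fixes \<gamma> \<alpha> \<beta> P Q :: real
  assumes fin: "finite V" and xV: "x \<in> V" and yV: "y \<in> V"
    and sym: "\<And>u v. E u v = E v u"
    and deg: "\<And>w. w \<in> V \<Longrightarrow> (\<Sum>z\<in>V. ind (E z w)) = P"
    and co: "(\<Sum>z\<in>V. ind (E z x) * ind (E z y)) = Q"
  shows "(\<Sum>z\<in>V. (\<gamma> + \<alpha>*ind (z=x) + \<beta>*ind (E z x)) * (\<gamma> + \<alpha>*ind (z=y) + \<beta>*ind (E z y)))
     = real (card V)*\<gamma>^2 + 2*\<gamma>*\<alpha> + 2*\<gamma>*\<beta>*P + \<alpha>^2*ind(x=y) + 2*\<alpha>*\<beta>*ind(E x y) + \<beta>^2*Q"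
proof -
  have "(\<Sum>z\<in>V. (\<gamma> + \<alpha>*ind (z=x) + \<beta>*ind (E z x)) * (\<gamma> + \<alpha>*ind (z=y) + \<beta>*ind (E z y)))
    = (\<Sum>z\<in>V. \<gamma>^2 + (\<gamma>*\<alpha>)*ind(z=y) + (\<gamma>*\<beta>)*ind(E z y) + (\<alpha>*\<gamma>)*ind(z=x)
        + \<alpha>^2*(ind(z=x)*ind(z=y)) + (\<alpha>*\<beta>)*(ind(z=x)*ind(E z y)) + (\<beta>*\<gamma>)*ind(E z x)
        + (\<beta>*\<alpha>)*(ind(z=y)*ind(E z x)) + \<beta>^2*(ind(E z x)*ind(E z y)))"
    by (rule sum.cong[OF refl]) algebra
  also have "\<dots> = real (card V)*\<gamma>^2 + (\<gamma>*\<alpha>)*(\<Sum>z\<in>V. ind(z=y)) + (\<gamma>*\<beta>)*(\<Sum>z\<in>V. ind(E z y))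
     + (\<alpha>*\<gamma>)*(\<Sum>z\<in>V. ind(z=x)) + \<alpha>^2*(\<Sum>z\<in>V. ind(z=x)*ind(z=y))
     + (\<alpha>*\<beta>)*(\<Sum>z\<in>V. ind(z=x)*ind(E z y)) + (\<beta>*\<gamma>)*(\<Sum>z\<in>V. ind(E z x))
     + (\<beta>*\<alpha>)*(\<Sum>z\<in>V. ind(z=y)*ind(E z x)) + \<beta>^2*(\<Sum>z\<in>V. ind(E z x)*ind(E z y))"
    by (simp add: sum.distrib sum_distrib_left)
  also have "\<dots> = real (card V)*\<gamma>^2 + 2*\<gamma>*\<alpha> + 2*\<gamma>*\<beta>*P + \<alpha>^2*ind(x=y) + 2*\<alpha>*\<beta>*ind(E x y) + \<beta>^2*Q"
  proof -
    have 1: "(\<Sum>z\<in>V. ind(z=y)) = 1" using dsum[OF fin yV, of "\<lambda>_. 1"] by simp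
    have 2: "(\<Sum>z\<in>V. ind(z=x)) = 1" using dsum[OF fin xV, of "\<lambda>_. 1"] by simp
    have 3: "(\<Sum>z\<in>V. ind(z=x)*ind(z=y)) = ind(x=y)" using dsum[OF fin xV, of "\<lambda>z. ind(z=y)"] by simp
    have 4: "(\<Sum>z\<in>V. ind(z=x)*ind(E z y)) = ind(E x y)" using dsum[OF fin xV, of "\<lambda>z. ind(E z y)"] by simp
    have 5: "(\<Sum>z\<in>V. ind(z=y)*ind(E z x)) = ind(E x y)" using dsum[OF fin yV, of "\<lambda>z. ind(E z x)"] sym by simp
    show ?thesis using 1 2 3 4 5 deg[OF xV] deg[OF yV] co by (simp add: algebra_simps)
  qed
  finally show ?thesis .
qed

theorem mainTheorem3:
  fixes V :: "'a set" and E :: "'a \<Rightarrow> 'a \<Rightarrow> bool" and n p a c :: nat and r s :: real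
  assumes srg: "strongly_regular V E n p a c"
    and hc: "0 < c" and hcp: "c < p" and hpn: "p < n - 1"
    and r_def: "r = (real a - real c + sqrt ((real a - real c)^2 + 4 * (real p - real c))) / 2"
    and s_def: "s = (real a - real c - sqrt ((real a - real c)^2 + 4 * (real p - real c))) / 2"
  shows "(\<forall>k::nat. odd k \<longrightarrow>
            (r * n + p - r)^k + (- real n + p - r)^k * p + (p - r)^k * (real n - p - 1) \<ge> 0)
       \<and> (\<forall>k::nat. odd k \<longrightarrow>
            (r * n + p - s)^k + (- real n + p - s)^k * p + (p - s)^k * (real n - p - 1) \<ge> 0)
       \<and> (\<forall>k l::nat. 0 < k \<and> 0 < l \<and> odd (k + l) \<longrightarrow>
            (r * n + p - r)^k * (r * n + p - s)^l + (- real n + p - r)^k * (- real n + p - s)^l * p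
            + (p - r)^k * (p - s)^l * (real n - p - 1) \<ge> 0)
       \<and> (\<forall>k l::nat. 0 < k \<and> odd l \<longrightarrow>
            (\<bar>s\<bar> * n + s - p)^k * (r * n + p - s)^l + (real n + s - p)^k * (- real n + p - s)^l * p
            + (s - p)^k * (p - s)^l * (real n - p - 1) \<ge> 0)"

proof -
  from srg have fin: "finite V" and cardV: "card V = n"
    and irr: "\<And>x. \<not> E x x" and sym0: "\<And>x y. E x y \<Longrightarrow> E y x"
    and ne: "\<exists>x\<in>V. \<exists>y\<in>V. x \<noteq> y \<and> \<not> E x y"
    and deg0: "\<And>x. x\<in>V \<Longrightarrow> card {y \<in> V. E x y} = p"
    and adjc: "\<And>x y. x\<in>V \<Longrightarrow> y\<in>V \<Longrightarrow> E x y \<Longrightarrow> card {z \<in> V. E x z \<and> E y z} = a"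
    and nonc: "\<And>x y. x\<in>V \<Longrightarrow> y\<in>V \<Longrightarrow> x \<noteq> y \<Longrightarrow> \<not> E x y \<Longrightarrow> card {z \<in> V. E x z \<and> E y z} = c"
    unfolding strongly_regular_def by auto
  have sym: "\<And>u v. E u v = E v u" using sym0 by blast
  obtain x0 where x0: "x0 \<in> V" using ne by blast
  have npos: "real n > 0" using hpn by simp
  have degE: "\<And>x. x \<in> V \<Longrightarrow> (\<Sum>y\<in>V. ind (E x y)) = real p"
    using deg0 by (simp add: sum_ind_card[OF fin])
  have deg: "\<And>w. w \<in> V \<Longrightarrow> (\<Sum>z\<in>V. ind (E z w)) = real p"
    using degE sym by simp
  define NN where "NN = (\<lambda>x y. real p*ind(x=y) + real a*ind(E x y) + real c*(1 - ind(x=y) - ind(E x y)))"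
  have co: "\<And>x y. x\<in>V \<Longrightarrow> y\<in>V \<Longrightarrow> (\<Sum>z\<in>V. ind (E z x) * ind (E z y)) = NN x y"
  proof -
    fix x y assume xy: "x\<in>V" "y\<in>V"
    have "(\<Sum>z\<in>V. ind (E z x) * ind (E z y)) = (\<Sum>z\<in>V. ind (E x z \<and> E y z))"
      by (rule sum.cong) (auto simp: ind_def sym)
    also have "\<dots> = real (card {z\<in>V. E x z \<and> E y z})" by (rule sum_ind_card[OF fin])
    also have "\<dots> = NN x y"
    proof (cases "x = y")
      case True then show ?thesis using deg0[OF xy(1)] irr by (simp add: NN_def ind_def)
    next
      case False
      show ?thesis
      proof (cases "E x y")
        case True then show ?thesis using adjc[OF xy True] False by (simp add: NN_def ind_def)
      next
        case F2: False then show ?thesis using nonc[OF xy False F2] False by (simp add: NN_def ind_def)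
      qed
    qed
    finally show "(\<Sum>z\<in>V. ind (E z x) * ind (E z y)) = NN x y" .
  qed
  have rowsum: "\<And>x u v w. x \<in> V \<Longrightarrow> (\<Sum>y\<in>V. if y = x then u else if E x y then v else w)
       = u + real p * v + (real n - real p - 1) * w"
  proof -
    fix u v w :: real and x :: 'a assume xV: "x \<in> V"
    have "(\<Sum>y\<in>V. if y = x then u else if E x y then v else w)
        = (\<Sum>y\<in>V. w + (u - w)*ind(y = x) + (v - w)*ind(E x y))"
      by (rule sum.cong) (auto simp: ind_def irr)
    also have "\<dots> = real n * w + (u - w)*(\<Sum>y\<in>V. ind(y = x)) + (v - w)*(\<Sum>y\<in>V. ind(E x y))"
      by (simp add: sum.distrib sum_distrib_left cardV)
    also have "\<dots> = u + real p * v + (real n - real p - 1) * w"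
      using dsum[OF fin xV, of "\<lambda>_. 1"] degE[OF xV] by (simp add: algebra_simps)
    finally show "(\<Sum>y\<in>V. if y = x then u else if E x y then v else w)
       = u + real p * v + (real n - real p - 1) * w" .
  qed
  have pp: "real p * real p = real p + real a * real p + real c * (real n - real p - 1)"
  proof -
    have "(\<Sum>y\<in>V. NN x0 y) = (\<Sum>y\<in>V. \<Sum>z\<in>V. ind (E z x0) * ind (E z y))"
      using co x0 by simp
    also have "\<dots> = (\<Sum>z\<in>V. ind (E z x0) * (\<Sum>y\<in>V. ind (E z y)))"
      unfolding sum_distrib_left by (rule sum.swap)
    also have "\<dots> = (\<Sum>z\<in>V. ind (E z x0) * real p)"
      using degE by simp
    also have "\<dots> = real p * real p" using deg[OF x0] by (simp add: sum_distrib_right[symmetric])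
    finally have A: "(\<Sum>y\<in>V. NN x0 y) = real p * real p" .
    have "(\<Sum>y\<in>V. NN x0 y) = (\<Sum>y\<in>V. if y = x0 then real p else if E x0 y then real a else real c)"
      by (rule sum.cong) (auto simp: NN_def ind_def irr)
    also have "\<dots> = real p + real p * real a + (real n - real p - 1) * real c" using rowsum[OF x0] .
    finally show ?thesis using A by (simp add: algebra_simps)
  qed

  define D where "D = (real a - real c)^2 + 4 * (real p - real c)"
  have Dge: "D \<ge> (real a - real c)^2" using hcp by (simp add: D_def)
  have D0: "D \<ge> 0" using Dge by (meson order_trans zero_le_power2)
  have sqD: "sqrt D ^ 2 = D" using D0 by simp
  have sqge: "sqrt D \<ge> \<bar>real a - real c\<bar>"
    using real_sqrt_le_mono[OF Dge] by simp
  have sqpos: "sqrt D > 0" using hcp by (simp add: D_def add_nonneg_pos)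
  have rD: "r = (real a - real c + sqrt D) / 2" using r_def unfolding D_def .
  have sD: "s = (real a - real c - sqrt D) / 2" using s_def unfolding D_def .
  have hsum: "r + s = real a - real c" using rD sD by (simp add: field_simps)
  have hdiff: "r - s = sqrt D" using rD sD by (simp add: field_simps)
  have hrs: "r * s = real c - real p"
  proof -
    have "r * s = ((real a - real c)^2 - sqrt D ^ 2) / 4" 
      by (simp only: rD sD) (simp add: field_simps power2_eq_square del: real_sqrt_mult_self)
    then show ?thesis using sqD by (simp add: D_def)
  qed
  have sneg: "s \<le> 0" using sD sqge by simp
  have rspos: "r - s > 0" using hdiff sqpos by simp
  have hnc: "real n * real c = (real p - r) * (real p - s)"
    using pp hsum hrs by algebra
  define lam where "lam = real n * (r - s)"
  have lampos: "lam > 0" using npos rspos by (simp add: lam_def)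
  have gramK: "\<And>\<gamma> \<alpha> \<beta>. real n*\<gamma>^2 + 2*\<gamma>*\<alpha> + 2*\<gamma>*\<beta>*real p + \<beta>^2*real c = lam*\<gamma> \<Longrightarrow>
      \<alpha>^2 + \<beta>^2*(real p - real c) = lam*\<alpha> \<Longrightarrow> 2*\<alpha>*\<beta> + \<beta>^2*(real a - real c) = lam*\<beta> \<Longrightarrow>
      gramV V (\<lambda>x y. \<gamma> + \<alpha>*ind (x=y) + \<beta>*ind (E x y))"
  proof -
    fix \<gamma> \<alpha> \<beta> :: real
    assume c0: "real n*\<gamma>^2 + 2*\<gamma>*\<alpha> + 2*\<gamma>*\<beta>*real p + \<beta>^2*real c = lam*\<gamma>"
      and c1: "\<alpha>^2 + \<beta>^2*(real p - real c) = lam*\<alpha>" and c2: "2*\<alpha>*\<beta> + \<beta>^2*(real a - real c) = lam*\<beta>"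
    show "gramV V (\<lambda>x y. \<gamma> + \<alpha>*ind (x=y) + \<beta>*ind (E x y))"
    proof (rule gram_sq[OF fin lampos], intro ballI)
      fix x y assume xy: "x \<in> V" "y \<in> V"
      have "(\<Sum>z\<in>V. (\<gamma> + \<alpha>*ind (z=x) + \<beta>*ind (E z x)) * (\<gamma> + \<alpha>*ind (z=y) + \<beta>*ind (E z y)))
        = real n*\<gamma>^2 + 2*\<gamma>*\<alpha> + 2*\<gamma>*\<beta>*real p + \<alpha>^2*ind(x=y) + 2*\<alpha>*\<beta>*ind(E x y) + \<beta>^2*NN x y"
        using expand[OF fin xy sym deg co[OF xy]] cardV by simp
      also have "\<dots> = lam * (\<gamma> + \<alpha>*ind (x=y) + \<beta>*ind (E x y))"
        unfolding NN_def using c0 c1 c2 by algebra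
      finally show "(\<Sum>z\<in>V. (\<gamma> + \<alpha>*ind (z=x) + \<beta>*ind (E z x)) * (\<gamma> + \<alpha>*ind (z=y) + \<beta>*ind (E z y)))
        = lam * (\<gamma> + \<alpha>*ind (x=y) + \<beta>*ind (E x y))" .
    qed
  qed
  have fin_ineq: "\<And>G u v w. gramV V G \<Longrightarrow> (\<And>x y. x\<in>V \<Longrightarrow> y\<in>V \<Longrightarrow> G x y = (if y = x then u else if E x y then v else w))
      \<Longrightarrow> u + v * real p + w * (real n - real p - 1) \<ge> 0"
  proof -
    fix G and u v w :: real
    assume g: "gramV V G" and G: "\<And>x y. x\<in>V \<Longrightarrow> y\<in>V \<Longrightarrow> G x y = (if y = x then u else if E x y then v else w)"
    have "0 \<le> (\<Sum>x\<in>V. \<Sum>y\<in>V. G x y)" by (rule gram_sum[OF fin g])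
    also have "\<dots> = (\<Sum>x\<in>V. u + real p * v + (real n - real p - 1) * w)"
      using G rowsum by simp
    also have "\<dots> = real n * (u + v * real p + w * (real n - real p - 1))" using cardV by (simp add: algebra_simps)
    finally show "u + v * real p + w * (real n - real p - 1) \<ge> 0" using npos
      by (simp add: zero_le_mult_iff)
  qed
  define K1 where "K1 = (\<lambda>x y. (real p - r) + (r*real n)*ind (x=y) + (- real n)*ind (E x y))"
  define K2 where "K2 = (\<lambda>x y. (real p - s) + (r*real n)*ind (x=y) + (- real n)*ind (E x y))"
  define K3 where "K3 = (\<lambda>x y. (s - real p) + (- s*real n)*ind (x=y) + (real n)*ind (E x y))"
  have g1: "gramV V K1" unfolding K1_def
    by (rule gramK) (use hnc hsum hrs in \<open>simp add: lam_def; algebra\<close>)+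
  have g2: "gramV V K2" unfolding K2_def
    by (rule gramK) (use hnc hsum hrs in \<open>simp add: lam_def; algebra\<close>)+
  have g3: "gramV V K3" unfolding K3_def
    by (rule gramK) (use hnc hsum hrs in \<open>simp add: lam_def; algebra\<close>)+
  have K1v: "\<And>x y. K1 x y = (if y = x then r * n + p - r else if E x y then - real n + p - r else p - r)"
    using irr by (auto simp: K1_def ind_def)
  have K2v: "\<And>x y. K2 x y = (if y = x then r * n + p - s else if E x y then - real n + p - s else p - s)"
    using irr by (auto simp: K2_def ind_def)
  have K3v: "\<And>x y. K3 x y = (if y = x then \<bar>s\<bar> * n + s - p else if E x y then real n + s - p else s - p)"
    using irr sneg by (auto simp: K3_def ind_def)
  show ?thesis
  proof (intro conjI allI impI)
    fix k :: nat
    show "(r * n + p - r)^k + (- real n + p - r)^k * p + (p - r)^k * (real n - p - 1) \<ge> 0"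
      by (rule fin_ineq[OF gram_pow[OF g1, of k]]) (simp add: K1v)
  next
    fix k :: nat
    show "(r * n + p - s)^k + (- real n + p - s)^k * p + (p - s)^k * (real n - p - 1) \<ge> 0"
      by (rule fin_ineq[OF gram_pow[OF g2, of k]]) (simp add: K2v)
  next
    fix k l :: nat
    show "(r * n + p - r)^k * (r * n + p - s)^l + (- real n + p - r)^k * (- real n + p - s)^l * p
            + (p - r)^k * (p - s)^l * (real n - p - 1) \<ge> 0"
      by (rule fin_ineq[OF gram_mult[OF gram_pow[OF g1, of k] gram_pow[OF g2, of l]]]) (simp add: K1v K2v)
  next
    fix k l :: nat
    show "(\<bar>s\<bar> * n + s - p)^k * (r * n + p - s)^l + (real n + s - p)^k * (- real n + p - s)^l * p
            + (s - p)^k * (p - s)^l * (real n - p - 1) \<ge> 0"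
      by (rule fin_ineq[OF gram_mult[OF gram_pow[OF g3, of k] gram_pow[OF g2, of l]]]) (simp add: K3v K2v)
  qed
qed

end
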